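(* Let $K$ be a finite field of characteristic $2$, let $P=\begin{pmatrix}1&1\\0&1\end{pmatrix}$, $Q=\begin{pmatrix}1&0\\1&1\end{pmatrix}\in M_2(K)$, and define on $K\times K$ (column vectors) the operation $x\cdot y:=Q^{-1}x+Py$. Then $(K\times K,\cdot)$ is an indecomposable and irretractable cycle set, and for every $(x_1,x_2)^T\in K\times K$, $$\langle (x_1,x_2)^T\rangle=\begin{cases}\{(x_1,x_2)^T\} & \text{if } x_1=x_2,\\ \{(x_1,x_2)^T,(x_1,x_1)^T,(x_2,x_2)^T,(x_2,x_1)^T\} & \text{if } x_1\neq x_2.\end{cases}$$
   Context: A cycle set is a non-empty set $X$ with one operation $\cdot$ such that each $\sigma_x:y\mapsto x\cdot y$ is bijective and $(x\cdot y)\cdot(x\cdot z)=(y\cdot x)\cdot(y\cdot z)$ for all $x,y,z$. A sub-cycle set is a subset that is a cycle set under the restricted operation; $\langle x\rangle$ is the smallest sub-cycle set containing $x$. $X$ is indecomposable if it admits no partition into two nonempty sub-cycle sets (for finite $X$, equivalently the group generated by all $\sigma_x$ acts transitively). The retraction $\mathrm{Ret}(X)$ is the quotient of $X$ by $x\sim y\iff\sigma_x=\sigma_y$ with induced operation; a finite cycle set $X$ is irretractable if its absolute retraction $\mathrm{Ret}^m(X)$ ($m$ smallest with $\mathrm{Ret}^m(X)\cong\mathrm{Ret}^{m+1}(X)$) is isomorphic to $X$. *)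

theory Defs
  imports "HOL-Analysis.Analysis"
begin

definition cycle_set :: "'a set \<Rightarrow> ('a \<Rightarrow> 'a \<Rightarrow> 'a) \<Rightarrow> bool" where
  "cycle_set X op \<longleftrightarrow> X \<noteq> {}
     \<and> (\<forall>x\<in>X. bij_betw (op x) X X)
     \<and> (\<forall>x\<in>X. \<forall>y\<in>X. \<forall>z\<in>X. op (op x y) (op x z) = op (op y x) (op y z))"

definition sub_cycle_set :: "'a set \<Rightarrow> ('a \<Rightarrow> 'a \<Rightarrow> 'a) \<Rightarrow> 'a set \<Rightarrow> bool" where
  "sub_cycle_set X op Y \<longleftrightarrow> Y \<subseteq> X \<and> cycle_set Y op"

definition gen_sub :: "'a set \<Rightarrow> ('a \<Rightarrow> 'a \<Rightarrow> 'a) \<Rightarrow> 'a \<Rightarrow> 'a set" where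
  "gen_sub X op x = \<Inter>{Y. sub_cycle_set X op Y \<and> x \<in> Y}"

definition indecomposable :: "'a set \<Rightarrow> ('a \<Rightarrow> 'a \<Rightarrow> 'a) \<Rightarrow> bool" where
  "indecomposable X op \<longleftrightarrow>
     \<not> (\<exists>Y Z. sub_cycle_set X op Y \<and> sub_cycle_set X op Z \<and> Y \<noteq> {} \<and> Z \<noteq> {}
              \<and> Y \<inter> Z = {} \<and> Y \<union> Z = X)"

definition cs_iso :: "'a set \<times> ('a \<Rightarrow> 'a \<Rightarrow> 'a) \<Rightarrow> 'b set \<times> ('b \<Rightarrow> 'b \<Rightarrow> 'b) \<Rightarrow> bool" where
  "cs_iso A B \<longleftrightarrow> (\<exists>f. bij_betw f (fst A) (fst B)
      \<and> (\<forall>x\<in>fst A. \<forall>y\<in>fst A. f (snd A x y) = snd B (f x) (f y)))"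

text \<open>Retraction, realised on a set of chosen representatives of the classes of
  x ~ y iff sigma_x = sigma_y (isomorphic to the quotient cycle set).\<close>
definition ret_rep :: "'a set \<Rightarrow> ('a \<Rightarrow> 'a \<Rightarrow> 'a) \<Rightarrow> 'a \<Rightarrow> 'a" where
  "ret_rep X op x = (SOME y. y \<in> X \<and> (\<forall>z\<in>X. op y z = op x z))"

definition ret :: "'a set \<times> ('a \<Rightarrow> 'a \<Rightarrow> 'a) \<Rightarrow> 'a set \<times> ('a \<Rightarrow> 'a \<Rightarrow> 'a)" where
  "ret A = (ret_rep (fst A) (snd A) ` fst A, \<lambda>a b. ret_rep (fst A) (snd A) (snd A a b))"

definition irretractable :: "'a set \<Rightarrow> ('a \<Rightarrow> 'a \<Rightarrow> 'a) \<Rightarrow> bool" where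
  "irretractable X op \<longleftrightarrow> finite X \<and>
     (let m = (LEAST m. cs_iso ((ret ^^ m) (X, op)) ((ret ^^ Suc m) (X, op)))
      in cs_iso ((ret ^^ m) (X, op)) (X, op))"

definition matP :: "'a::field^2^2" where
  "matP = vector [vector [1, 1], vector [0, 1]]"

definition matQ :: "'a::field^2^2" where
  "matQ = vector [vector [1, 0], vector [1, 1]]"

definition ex_op :: "'a::field^2 \<Rightarrow> 'a^2 \<Rightarrow> 'a^2" where
  "ex_op x y = matrix_inv matQ *v x + matP *v y"

end

theory Submission
  imports Defs
begin

lemma two0: assumes "CHAR('a::field) = 2" shows "(x::'a) + x = 0"
proof -
  have "(2::'a) = 0" using of_nat_CHAR[where 'a='a] assms by simp
  hence "x * 2 = 0" by simp
  thus ?thesis by (metis mult_2_right)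
qed

lemma two0': assumes "CHAR('a::field) = 2" shows "(x::'a) + (x + y) = y"
  by (metis add.assoc add_0 two0[OF assms])

lemma Qent: "(matQ::'a::field^2^2) $ 1 $ 1 = 1" "(matQ::'a::field^2^2) $ 1 $ 2 = 0"
  "(matQ::'a::field^2^2) $ 2 $ 1 = 1" "(matQ::'a::field^2^2) $ 2 $ 2 = 1"
  unfolding matQ_def by simp_all

lemma Pent: "(matP::'a::field^2^2) $ 1 $ 1 = 1" "(matP::'a::field^2^2) $ 1 $ 2 = 1"
  "(matP::'a::field^2^2) $ 2 $ 1 = 0" "(matP::'a::field^2^2) $ 2 $ 2 = 1"
  unfolding matP_def by simp_all

lemma QQ: assumes "CHAR('a::field) = 2" shows "(matQ::'a^2^2) ** matQ = mat 1"
proof -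
  have e: "((matQ::'a^2^2) ** matQ) $ i $ j = matQ $ i $ 1 * matQ $ 1 $ j + matQ $ i $ 2 * matQ $ 2 $ j" for i j
    by (simp add: matrix_matrix_mult_def sum_2)
  have m: "(mat 1 :: 'a^2^2) $ i $ j = (if i = j then 1 else 0)" for i j
    by (simp add: mat_def)
  show ?thesis unfolding vec_eq_iff forall_2 e m
    by (simp add: Qent two0[OF assms])
qed

lemma Qinv: assumes "CHAR('a::field) = 2" shows "matrix_inv (matQ::'a^2^2) = matQ"
proof -
  define M where "M = matrix_inv (matQ::'a^2^2)"
  have "matQ ** M = mat 1 \<and> M ** matQ = mat 1"
    unfolding M_def matrix_inv_def by (rule someI[of _ matQ]) (simp add: QQ[OF assms])
  hence "M ** matQ = mat 1" by simp
  hence "M = matQ" by (metis QQ[OF assms] matrix_mul_assoc matrix_mul_rid matrix_mul_lid)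
  thus ?thesis by (simp add: M_def)
qed

lemma mv: "((A::'a::field^2^2) *v v) $ i = A $ i $ 1 * v $ 1 + A $ i $ 2 * v $ 2"
  by (simp add: matrix_vector_mult_def sum_2)

lemma op1: assumes "CHAR('a::field) = 2" shows "(ex_op x y :: 'a^2) $ 1 = x$1 + y$1 + y$2"
  unfolding ex_op_def Qinv[OF assms] vector_add_component mv Qent Pent by simp

lemma op2: assumes "CHAR('a::field) = 2" shows "(ex_op x y :: 'a^2) $ 2 = x$1 + x$2 + y$2"
  unfolding ex_op_def Qinv[OF assms] vector_add_component mv Qent Pent by simp

lemma vec2_eq: "((v::'a^2) = w) \<longleftrightarrow> v$1 = w$1 \<and> v$2 = w$2"
  by (simp add: vec_eq_iff forall_2)

context
  fixes dummy :: "'a::{field,finite} itself"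
  assumes ch: "CHAR('a) = 2"
begin

lemmas o1 = op1[OF ch] and o2 = op2[OF ch] and t0 = two0[OF ch] and t0' = two0'[OF ch]

lemma inj_op: "inj (ex_op (x::'a^2))"
proof (rule injI)
  fix y z :: "'a^2" assume "ex_op x y = ex_op x z"
  hence a: "x$1 + y$1 + y$2 = x$1 + z$1 + z$2" and b: "x$1 + x$2 + y$2 = x$1 + x$2 + z$2"
    by (metis o1, metis o2)
  from b have "y$2 = z$2" by simp
  with a have "y$1 = z$1" by simp
  with \<open>y$2 = z$2\<close> show "y = z" by (simp add: vec2_eq)
qed

lemma bij_op: "bij (ex_op (x::'a^2))"
  using inj_op finite_UNIV_inj_surj[of "ex_op x"] by (simp add: bij_def)

lemma surj_first: "\<exists>x::'a^2. ex_op x y = w"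
proof -
  define x :: "'a^2" where "x = vector [w$1 - y$1 - y$2, w$2 - y$2 - (w$1 - y$1 - y$2)]"
  have "ex_op x y = w" by (simp add: vec2_eq o1 o2 x_def)
  thus ?thesis by blast
qed

lemma cyc: "ex_op (ex_op x y) (ex_op x z) = ex_op (ex_op y x) (ex_op (y::'a^2) z)"
  unfolding vec2_eq o1 o2 by (simp add: add_ac t0 t0')

lemma cs_univ: "cycle_set (UNIV :: ('a^2) set) ex_op"
  unfolding cycle_set_def using bij_op cyc by auto

lemma closed: assumes "sub_cycle_set UNIV ex_op Y" "a \<in> Y" "b \<in> Y" shows "ex_op a b \<in> Y"
  using assms unfolding sub_cycle_set_def cycle_set_def by (meson bij_betwE)

lemma indec: "indecomposable (UNIV :: ('a^2) set) ex_op"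
  unfolding indecomposable_def
proof clarify
  fix Y Z :: "('a^2) set"
  assume Y: "sub_cycle_set UNIV ex_op Y" and Z: "sub_cycle_set UNIV ex_op Z"
    and ne: "Y \<noteq> {}" "Z \<noteq> {}" and dj: "Y \<inter> Z = {}" and un: "Y \<union> Z = UNIV"
  obtain y where y: "y \<in> Y" using ne by auto
  obtain z where z: "z \<in> Z" using ne by auto
  obtain x where x: "ex_op x y = z" using surj_first by blast
  show False
  proof (cases "x \<in> Y")
    case True
    then have "z \<in> Y" using closed[OF Y True y] x by simp
    then show False using z dj by auto
  next
    case False
    then have xZ: "x \<in> Z" using un by auto
    have "bij_betw (ex_op x) Z Z" using Z xZ unfolding sub_cycle_set_def cycle_set_def by auto
    then obtain z' where "z' \<in> Z" "ex_op x z' = z" using z by (metis bij_betw_iff_bijections)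
    then have "z' = y" using x inj_op[of x] by (metis injD)
    then show False using y dj \<open>z' \<in> Z\<close> by auto
  qed
qed

lemma rep_id: "ret_rep (UNIV::('a^2) set) ex_op x = x"
  unfolding ret_rep_def
proof (rule some_equality)
  fix y assume "y \<in> UNIV \<and> (\<forall>z\<in>UNIV. ex_op y z = ex_op x z)"
  hence "ex_op y 0 = ex_op x 0" by simp
  hence "y$1 = x$1" "y$1 + y$2 = x$1 + x$2" by (metis o1 zero_index add_0_right, metis o2 zero_index add_0_right)
  thus "y = x" by (simp add: vec2_eq)
qed simp

lemma ret_id: "ret (UNIV::('a^2) set, ex_op) = (UNIV, ex_op)"
proof -
  have "ret_rep (UNIV::('a^2) set) ex_op = id" using rep_id by auto
  thus ?thesis unfolding ret_def by simp
qed

lemma retn: "(ret ^^ n) (UNIV::('a^2) set, ex_op) = (UNIV, ex_op)"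
  by (induction n) (simp_all add: ret_id)

lemma irr: "irretractable (UNIV :: ('a^2) set) ex_op"
  unfolding irretractable_def Let_def retn cs_iso_def by auto

lemma sub_of_closed:
  assumes "S \<noteq> {}" "\<And>a b. a \<in> S \<Longrightarrow> b \<in> S \<Longrightarrow> ex_op a b \<in> S"
  shows "sub_cycle_set UNIV ex_op (S::('a^2) set)"
  unfolding sub_cycle_set_def cycle_set_def
proof (intro conjI ballI)
  fix a assume a: "a \<in> S"
  have "finite S" by simp
  moreover have "ex_op a ` S \<subseteq> S" using assms(2) a by auto
  moreover have "inj_on (ex_op a) S" using inj_op[of a] inj_on_subset[of "ex_op a" UNIV S] by simp
  ultimately have "ex_op a ` S = S" by (rule endo_inj_surj)
  with \<open>inj_on (ex_op a) S\<close> show "bij_betw (ex_op a) S S" unfolding bij_betw_def by blast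
next
  show "S \<subseteq> UNIV" by simp
next
  show "S \<noteq> {}" by (rule assms(1))
next
  fix a b c assume "a \<in> S" "b \<in> S" "c \<in> S"
  show "ex_op (ex_op a b) (ex_op a c) = ex_op (ex_op b a) (ex_op b c)" by (rule cyc)
qed

lemma gen_eq:
  assumes "sub_cycle_set UNIV ex_op S" "x \<in> S"
    "\<And>Y. sub_cycle_set UNIV ex_op Y \<Longrightarrow> x \<in> Y \<Longrightarrow> S \<subseteq> Y"
  shows "gen_sub UNIV ex_op (x::'a^2) = S"
  unfolding gen_sub_def using assms by blast

lemma gen_x: "gen_sub UNIV ex_op (x::'a^2) =
            (if x$1 = x$2 then {x}
             else {x, vector [x$1, x$1], vector [x$2, x$2], vector [x$2, x$1]})"
proof (cases "x$1 = x$2")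
  case True
  have xx: "ex_op x x = x" using True by (simp add: vec2_eq o1 o2 add_ac t0 t0')
  have "gen_sub UNIV ex_op x = {x}"
  proof (rule gen_eq)
    show "sub_cycle_set UNIV ex_op {x}" by (rule sub_of_closed) (simp_all add: xx)
  qed simp_all
  then show ?thesis using True by simp
next
  case False
  define p where "p = x$1"
  define q where "q = x$2"
  define S where "S = {x, vector [p, p], vector [q, q], vector [q, p]}"
  have S': "S = {v. v$1 \<in> {p,q} \<and> v$2 \<in> {p,q}}"
    unfolding S_def by (auto simp: vec2_eq p_def q_def)
  have three: "u + v + w \<in> {p, q}" if "u \<in> {p,q}" "v \<in> {p,q}" "w \<in> {p,q}" for u v w
  proof -
    have "p + p + p = p" "p + p + q = q" "p + q + p = q" "p + q + q = p"
         "q + p + p = q" "q + p + q = p" "q + q + p = p" "q + q + q = q"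
      by (simp_all add: add_ac t0 t0')
    thus ?thesis using that by auto
  qed
  have cl: "ex_op a b \<in> S" if "a \<in> S" "b \<in> S" for a b
  proof -
    have "a$1 \<in> {p,q}" "a$2 \<in> {p,q}" "b$1 \<in> {p,q}" "b$2 \<in> {p,q}" using that unfolding S' by auto
    hence "(ex_op a b)$1 \<in> {p,q}" "(ex_op a b)$2 \<in> {p,q}" unfolding o1 o2 using three by blast+
    thus ?thesis unfolding S' by blast
  qed
  have "gen_sub UNIV ex_op x = S"
  proof (rule gen_eq)
    show "sub_cycle_set UNIV ex_op S" by (rule sub_of_closed[OF _ cl]) (auto simp: S_def)
    show "x \<in> S" by (simp add: S_def)
  next
    fix Y assume Y: "sub_cycle_set UNIV ex_op Y" and x: "x \<in> Y"
    have e1: "ex_op x x = vector [q, p]" by (simp add: vec2_eq o1 o2 p_def q_def add_ac t0 t0')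
    have e2: "ex_op x (vector [q, p]) = vector [q, q]" by (simp add: vec2_eq o1 o2 p_def q_def add_ac t0 t0')
    have e3: "ex_op (vector [q, p]) x = vector [p, p]" by (simp add: vec2_eq o1 o2 p_def q_def add_ac t0 t0')
    have a: "vector [q, p] \<in> Y" using closed[OF Y x x] e1 by simp
    have b: "vector [q, q] \<in> Y" using closed[OF Y x a] e2 by simp
    have c: "vector [p, p] \<in> Y" using closed[OF Y a x] e3 by simp
    show "S \<subseteq> Y" using a b c x by (auto simp: S_def)
  qed
  then show ?thesis using False by (simp add: S_def p_def q_def)
qed

end

theorem mainTheorem9:
  assumes "CHAR('a::{field,finite}) = 2"
  shows "cycle_set (UNIV :: ('a^2) set) ex_op
       \<and> indecomposable (UNIV :: ('a^2) set) ex_op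
       \<and> irretractable (UNIV :: ('a^2) set) ex_op
       \<and> (\<forall>x :: 'a^2. gen_sub UNIV ex_op x =
            (if x$1 = x$2 then {x}
             else {x, vector [x$1, x$1], vector [x$2, x$2], vector [x$2, x$1]}))"
  using cs_univ[OF assms] indec[OF assms] irr[OF assms] gen_x[OF assms] by (intro conjI allI)

end
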